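(* Let $m,d,d_{\mathrm{head}}$ be positive integers with $d_{\mathrm{head}}\mid d$, $h=d/d_{\mathrm{head}}$, and let $X\in\mathbb{R}^{m\times d}$, $W_{Q,r},W_{K,r},W_{V,r}\in\mathbb{R}^{d\times d_{\mathrm{head}}}$ for $r=1,\dots,h$, and $W_O\in\mathbb{R}^{d\times d}$. Define $Q_r=XW_{Q,r}$, $K_r=XW_{K,r}$, $V_r=XW_{V,r}$, $E_r=Q_rK_r^\top/\sqrt{d_{\mathrm{head}}}\in\mathbb{R}^{m\times m}$, $A_r=\mathrm{softmax}(E_r)$ (row-wise), $O_r=A_rV_r$, $O=\mathrm{Concat}(O_1,\dots,O_h)\in\mathbb{R}^{m\times d}$ (column-wise), and $f=OW_O$. Assume all entries of $f,O,E_r,Q_r,K_r,V_r$ are nonzero, and let $R(f)\in\mathbb{R}^{m\times d}$ be arbitrary. Set $\Lambda_f=R(f)/f$, $R(O_r)=\big[\tfrac12 O\odot(\Lambda_fW_O^\top)\big]_r$, $\Lambda_{O,r}=R(O_r)/O_r$, $\Phi_r=\big(A_r\odot[\Lambda_{O,r}V_r^\top]\big)/E_r$, $\Theta_{Q,r}=\Phi_rK_r$, $\Theta_{K,r}=\Phi_r^\top Q_r$, $\Theta_{V,r}=A_r^\top\Lambda_{O,r}$, and $\alpha=\frac{1}{8\sqrt{d_{\mathrm{head}}}}$. Then the relevances obtained by applying the bilinear LRP rule to $f=OW_O$, to each $O_r=A_rV_r$, treating softmax as identity relevance propagation ($R(E_r)=R(A_r)$), applying the bilinear rule to $E_r=Q_rK_r^\top/\sqrt{d_{\mathrm{head}}}$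 and to $Q_r=XW_{Q,r}$, $K_r=XW_{K,r}$, $V_r=XW_{V,r}$ (summing the relevance of $X$ over all heads and all three projections) are $$R(W_O)=\tfrac12 W_O\odot[O^\top\Lambda_f],\quad R(W_{Q,r})=\alpha\,W_{Q,r}\odot[X^\top\Theta_{Q,r}],\quad R(W_{K,r})=\alpha\,W_{K,r}\odot[X^\top\Theta_{K,r}],\quad R(W_{V,r})=\tfrac14 W_{V,r}\odot[X^\top\Theta_{V,r}],$$ $$R(X)=X\odot\sum_{r=1}^{h}\Big[\alpha\,\Theta_{Q,r}W_{Q,r}^\top+\alpha\,\Theta_{K,r}W_{K,r}^\top+\tfrac14\Theta_{V,r}W_{V,r}^\top\Big],$$ and they satisfy $$\sum R(X)+\sum R(W_O)+\sum_{r=1}^{h}\Big[\sum R(W_{Q,r})+\sum R(W_{K,r})+\sum R(W_{V,r})\Big]=\sum R(f),$$ where $\sum$ denotes the sum of all entries.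
   Context: $\odot$ is element-wise product; all matrix divisions are element-wise; $[M]_r$ denotes the $r$-th column block (columns $(r-1)d_{\mathrm{head}}+1,\dots,rd_{\mathrm{head}}$) of a matrix $M$ with $d$ columns. Bilinear LRP rule for a bilinear expression $C_{ij}=\sum_a c\,P_{ia}W_{aj}$ (with constant $c$, plus possibly a bias) and output relevance $R(C)$: each product term receives $\frac{c\,P_{ia}W_{aj}}{C_{ij}}R(C)_{ij}$, split equally between its two factors; relevances of an entry are summed over all terms in which it appears. *)

theory Defs
  imports Complex_Main
begin

text \<open>Matrices are functions nat => nat => real, indexed from 0; dimensions are
  passed explicitly and only entries within range are meaningful.  Per-head
  families of matrices are indexed by the head r = 0..h-1 (paper: r = 1..h).\<close>

type_synonym mat = "nat \<Rightarrow> nat \<Rightarrow> real"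
type_synonym hmat = "nat \<Rightarrow> nat \<Rightarrow> nat \<Rightarrow> real"

definition mmul :: "nat \<Rightarrow> mat \<Rightarrow> mat \<Rightarrow> mat" where
  "mmul k P W = (\<lambda>i j. \<Sum>a<k. P i a * W a j)"

definition tr :: "mat \<Rightarrow> mat" where
  "tr M = (\<lambda>i j. M j i)"

definition softmax :: "nat \<Rightarrow> mat \<Rightarrow> mat" where
  "softmax n E = (\<lambda>i j. exp (E i j) / (\<Sum>k<n. exp (E i k)))"

text \<open>Bilinear LRP rule for C i j = c * sum_a P i a * W a j (C given), output
  relevance RC: each term receives c P i a W a j / C i j * RC i j, split equally
  between its two factors; relevances summed over all terms containing the entry.
  lrp_left: relevance of P (n = number of columns of C);
  lrp_right: relevance of W (m = number of rows of C).\<close>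
definition lrp_left :: "real \<Rightarrow> nat \<Rightarrow> mat \<Rightarrow> mat \<Rightarrow> mat \<Rightarrow> mat \<Rightarrow> mat" where
  "lrp_left c n P W C RC = (\<lambda>i a. \<Sum>j<n. (c * P i a * W a j / C i j) * RC i j / 2)"

definition lrp_right :: "real \<Rightarrow> nat \<Rightarrow> mat \<Rightarrow> mat \<Rightarrow> mat \<Rightarrow> mat \<Rightarrow> mat" where
  "lrp_right c m P W C RC = (\<lambda>a j. \<Sum>i<m. (c * P i a * W a j / C i j) * RC i j / 2)"

definition block :: "nat \<Rightarrow> mat \<Rightarrow> nat \<Rightarrow> mat" where
  "block dh M r = (\<lambda>i j. M i (r * dh + j))"

definition concat_heads :: "nat \<Rightarrow> hmat \<Rightarrow> mat" where
  "concat_heads dh Os = (\<lambda>i j. Os (j div dh) i (j mod dh))"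

definition msum :: "nat \<Rightarrow> nat \<Rightarrow> mat \<Rightarrow> real" where
  "msum m n M = (\<Sum>i<m. \<Sum>j<n. M i j)"

definition mha_Q :: "nat \<Rightarrow> mat \<Rightarrow> hmat \<Rightarrow> hmat" where
  "mha_Q d X WQ r = mmul d X (WQ r)"

definition mha_E :: "nat \<Rightarrow> nat \<Rightarrow> mat \<Rightarrow> hmat \<Rightarrow> hmat \<Rightarrow> hmat" where
  "mha_E d dh X WQ WK r = (\<lambda>i j. mmul dh (mha_Q d X WQ r) (tr (mha_Q d X WK r)) i j / sqrt (real dh))"

definition mha_A :: "nat \<Rightarrow> nat \<Rightarrow> nat \<Rightarrow> mat \<Rightarrow> hmat \<Rightarrow> hmat \<Rightarrow> hmat" where
  "mha_A m d dh X WQ WK r = softmax m (mha_E d dh X WQ WK r)"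

definition mha_Oh :: "nat \<Rightarrow> nat \<Rightarrow> nat \<Rightarrow> mat \<Rightarrow> hmat \<Rightarrow> hmat \<Rightarrow> hmat \<Rightarrow> hmat" where
  "mha_Oh m d dh X WQ WK WV r = mmul m (mha_A m d dh X WQ WK r) (mha_Q d X WV r)"

definition mha_O :: "nat \<Rightarrow> nat \<Rightarrow> nat \<Rightarrow> mat \<Rightarrow> hmat \<Rightarrow> hmat \<Rightarrow> hmat \<Rightarrow> mat" where
  "mha_O m d dh X WQ WK WV = concat_heads dh (mha_Oh m d dh X WQ WK WV)"

definition mha_f :: "nat \<Rightarrow> nat \<Rightarrow> nat \<Rightarrow> mat \<Rightarrow> hmat \<Rightarrow> hmat \<Rightarrow> hmat \<Rightarrow> mat \<Rightarrow> mat" where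
  "mha_f m d dh X WQ WK WV WO = mmul d (mha_O m d dh X WQ WK WV) WO"

definition lrp_O :: "nat \<Rightarrow> nat \<Rightarrow> nat \<Rightarrow> mat \<Rightarrow> hmat \<Rightarrow> hmat \<Rightarrow> hmat \<Rightarrow> mat \<Rightarrow> mat \<Rightarrow> mat" where
  "lrp_O m d dh X WQ WK WV WO Rf =
     lrp_left 1 d (mha_O m d dh X WQ WK WV) WO (mha_f m d dh X WQ WK WV WO) Rf"

definition lrp_WO :: "nat \<Rightarrow> nat \<Rightarrow> nat \<Rightarrow> mat \<Rightarrow> hmat \<Rightarrow> hmat \<Rightarrow> hmat \<Rightarrow> mat \<Rightarrow> mat \<Rightarrow> mat" where
  "lrp_WO m d dh X WQ WK WV WO Rf =
     lrp_right 1 m (mha_O m d dh X WQ WK WV) WO (mha_f m d dh X WQ WK WV WO) Rf"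

definition lrp_Oh :: "nat \<Rightarrow> nat \<Rightarrow> nat \<Rightarrow> mat \<Rightarrow> hmat \<Rightarrow> hmat \<Rightarrow> hmat \<Rightarrow> mat \<Rightarrow> mat \<Rightarrow> hmat" where
  "lrp_Oh m d dh X WQ WK WV WO Rf r = block dh (lrp_O m d dh X WQ WK WV WO Rf) r"

definition lrp_A :: "nat \<Rightarrow> nat \<Rightarrow> nat \<Rightarrow> mat \<Rightarrow> hmat \<Rightarrow> hmat \<Rightarrow> hmat \<Rightarrow> mat \<Rightarrow> mat \<Rightarrow> hmat" where
  "lrp_A m d dh X WQ WK WV WO Rf r =
     lrp_left 1 dh (mha_A m d dh X WQ WK r) (mha_Q d X WV r) (mha_Oh m d dh X WQ WK WV r)
       (lrp_Oh m d dh X WQ WK WV WO Rf r)"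

definition lrp_V :: "nat \<Rightarrow> nat \<Rightarrow> nat \<Rightarrow> mat \<Rightarrow> hmat \<Rightarrow> hmat \<Rightarrow> hmat \<Rightarrow> mat \<Rightarrow> mat \<Rightarrow> hmat" where
  "lrp_V m d dh X WQ WK WV WO Rf r =
     lrp_right 1 m (mha_A m d dh X WQ WK r) (mha_Q d X WV r) (mha_Oh m d dh X WQ WK WV r)
       (lrp_Oh m d dh X WQ WK WV WO Rf r)"

definition lrp_E :: "nat \<Rightarrow> nat \<Rightarrow> nat \<Rightarrow> mat \<Rightarrow> hmat \<Rightarrow> hmat \<Rightarrow> hmat \<Rightarrow> mat \<Rightarrow> mat \<Rightarrow> hmat" where
  "lrp_E m d dh X WQ WK WV WO Rf r = lrp_A m d dh X WQ WK WV WO Rf r"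

text \<open>R(Q_r), R(K_r) from E_r = (1/sqrt dh) Q_r K_r^T (R(K_r) is the transpose of
  the relevance of the right factor K_r^T).\<close>
definition lrp_Q :: "nat \<Rightarrow> nat \<Rightarrow> nat \<Rightarrow> mat \<Rightarrow> hmat \<Rightarrow> hmat \<Rightarrow> hmat \<Rightarrow> mat \<Rightarrow> mat \<Rightarrow> hmat" where
  "lrp_Q m d dh X WQ WK WV WO Rf r =
     lrp_left (1 / sqrt (real dh)) m (mha_Q d X WQ r) (tr (mha_Q d X WK r))
       (mha_E d dh X WQ WK r) (lrp_E m d dh X WQ WK WV WO Rf r)"

definition lrp_K :: "nat \<Rightarrow> nat \<Rightarrow> nat \<Rightarrow> mat \<Rightarrow> hmat \<Rightarrow> hmat \<Rightarrow> hmat \<Rightarrow> mat \<Rightarrow> mat \<Rightarrow> hmat" where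
  "lrp_K m d dh X WQ WK WV WO Rf r =
     tr (lrp_right (1 / sqrt (real dh)) m (mha_Q d X WQ r) (tr (mha_Q d X WK r))
       (mha_E d dh X WQ WK r) (lrp_E m d dh X WQ WK WV WO Rf r))"

definition lrp_WQ :: "nat \<Rightarrow> nat \<Rightarrow> nat \<Rightarrow> mat \<Rightarrow> hmat \<Rightarrow> hmat \<Rightarrow> hmat \<Rightarrow> mat \<Rightarrow> mat \<Rightarrow> hmat" where
  "lrp_WQ m d dh X WQ WK WV WO Rf r =
     lrp_right 1 m X (WQ r) (mha_Q d X WQ r) (lrp_Q m d dh X WQ WK WV WO Rf r)"

definition lrp_WK :: "nat \<Rightarrow> nat \<Rightarrow> nat \<Rightarrow> mat \<Rightarrow> hmat \<Rightarrow> hmat \<Rightarrow> hmat \<Rightarrow> mat \<Rightarrow> mat \<Rightarrow> hmat" where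
  "lrp_WK m d dh X WQ WK WV WO Rf r =
     lrp_right 1 m X (WK r) (mha_Q d X WK r) (lrp_K m d dh X WQ WK WV WO Rf r)"

definition lrp_WV :: "nat \<Rightarrow> nat \<Rightarrow> nat \<Rightarrow> mat \<Rightarrow> hmat \<Rightarrow> hmat \<Rightarrow> hmat \<Rightarrow> mat \<Rightarrow> mat \<Rightarrow> hmat" where
  "lrp_WV m d dh X WQ WK WV WO Rf r =
     lrp_right 1 m X (WV r) (mha_Q d X WV r) (lrp_V m d dh X WQ WK WV WO Rf r)"

definition lrp_X :: "nat \<Rightarrow> nat \<Rightarrow> nat \<Rightarrow> nat \<Rightarrow> mat \<Rightarrow> hmat \<Rightarrow> hmat \<Rightarrow> hmat \<Rightarrow> mat \<Rightarrow> mat \<Rightarrow> mat" where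
  "lrp_X h m d dh X WQ WK WV WO Rf = (\<lambda>i a. \<Sum>r<h.
       lrp_left 1 dh X (WQ r) (mha_Q d X WQ r) (lrp_Q m d dh X WQ WK WV WO Rf r) i a
     + lrp_left 1 dh X (WK r) (mha_Q d X WK r) (lrp_K m d dh X WQ WK WV WO Rf r) i a
     + lrp_left 1 dh X (WV r) (mha_Q d X WV r) (lrp_V m d dh X WQ WK WV WO Rf r) i a)"

end

theory Submission
  imports Defs
begin

lemma aux: "(c*p*w/C)*r/2 = c/2*p*(w*(r/(C::real)))" by (cases "C=0") (simp_all add: field_simps)
lemma lrp_left_eq: "lrp_left c n P W C RC i a = c/2 * P i a * (\<Sum>j<n. W a j * (RC i j / C i j))"
  unfolding lrp_left_def sum_distrib_left aux ..
lemma lrp_right_eq: "lrp_right c m P W C RC a j = c/2 * W a j * (\<Sum>i<m. P i a * (RC i j / C i j))"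
  unfolding lrp_right_def sum_distrib_left aux by (simp add: mult_ac)
lemma msum_tr: "msum m n (tr M) = msum n m M"
  unfolding msum_def tr_def by (rule sum.swap)
lemma swap_in: "(\<Sum>i\<in>I. \<Sum>j\<in>J. \<Sum>r\<in>R. F i j r) = (\<Sum>i\<in>I. \<Sum>r\<in>R. \<Sum>j\<in>J. F i j r)"
  by (rule sum.cong[OF refl], rule sum.swap)
lemma msum_sum: "msum m n (\<lambda>i j. \<Sum>r<h. F r i j) = (\<Sum>r<h. msum m n (F r))"
  unfolding msum_def by (rule trans[OF swap_in sum.swap])
lemma msum_add3: "msum m n (\<lambda>i j. F i j + G i j + H i j) = msum m n F + msum m n G + msum m n H"
  unfolding msum_def by (simp add: sum.distrib)
lemma msum_block: "msum m (h*dh) M = (\<Sum>r<h. msum m dh (block dh M r))"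
proof -
  have "msum m (h*dh) M = (\<Sum>i<m. \<Sum>r<h. \<Sum>j<dh. M i (r*dh+j))"
    unfolding msum_def
  proof (rule sum.cong[OF refl])
    fix i
    have "(\<Sum>j<h*dh. M i j) = (\<Sum>r<h. sum (M i) {r*dh..<r*dh+dh})"
      by (rule sum.nat_group[symmetric])
    also have "\<dots> = (\<Sum>r<h. \<Sum>j<dh. M i (r*dh+j))"
    proof (rule sum.cong[OF refl])
      fix r
      show "sum (M i) {r*dh..<r*dh+dh} = (\<Sum>j<dh. M i (r*dh+j))"
        using sum.shift_bounds_nat_ivl[of "M i" 0 "r*dh" dh]
        by (simp add: lessThan_atLeast0 add.commute)
    qed
    finally show "(\<Sum>j<h*dh. M i j) = (\<Sum>r<h. \<Sum>j<dh. M i (r*dh+j))" .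
  qed
  also have "\<dots> = (\<Sum>r<h. msum m dh (block dh M r))"
    unfolding msum_def block_def by (rule sum.swap)
  finally show ?thesis .
qed

lemma conserve:
  assumes C: "\<forall>i<m. \<forall>j<n. C i j = c * (\<Sum>a<k. P i a * W a j)"
    and nz: "\<forall>i<m. \<forall>j<n. C i j \<noteq> 0"
  shows "msum m k (lrp_left c n P W C RC) + msum k n (lrp_right c m P W C RC) = msum m n RC"
proof -
  let ?T = "\<lambda>i a j. (c * P i a * W a j / C i j) * RC i j / 2"
  have 1: "msum m k (lrp_left c n P W C RC) = (\<Sum>i<m. \<Sum>j<n. \<Sum>a<k. ?T i a j)"
    unfolding msum_def lrp_left_def by (rule swap_in)
  have "msum k n (lrp_right c m P W C RC) = (\<Sum>a<k. \<Sum>j<n. \<Sum>i<m. ?T i a j)"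
    unfolding msum_def lrp_right_def ..
  also have "\<dots> = (\<Sum>a<k. \<Sum>i<m. \<Sum>j<n. ?T i a j)" by (rule swap_in)
  also have "\<dots> = (\<Sum>i<m. \<Sum>a<k. \<Sum>j<n. ?T i a j)" by (rule sum.swap)
  also have "\<dots> = (\<Sum>i<m. \<Sum>j<n. \<Sum>a<k. ?T i a j)" by (rule swap_in)
  finally have 2: "msum k n (lrp_right c m P W C RC) = (\<Sum>i<m. \<Sum>j<n. \<Sum>a<k. ?T i a j)" .
  have 3: "(\<Sum>a<k. ?T i a j) = RC i j / 2" if "i < m" "j < n" for i j
  proof -
    have "(\<Sum>a<k. ?T i a j) = (c * (\<Sum>a<k. P i a * W a j)) / C i j * RC i j / 2"
      by (simp add: sum_distrib_left sum_divide_distrib sum_distrib_right mult_ac)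
    also have "\<dots> = RC i j / 2" using C nz that by simp
    finally show ?thesis .
  qed
  have 4: "(\<Sum>i<m. \<Sum>j<n. \<Sum>a<k. ?T i a j) = (\<Sum>i<m. \<Sum>j<n. RC i j / 2)"
    by (intro sum.cong refl) (metis 3 lessThan_iff)
  have "msum m k (lrp_left c n P W C RC) + msum k n (lrp_right c m P W C RC)
      = (\<Sum>i<m. \<Sum>j<n. RC i j / 2) + (\<Sum>i<m. \<Sum>j<n. RC i j / 2)"
    unfolding 1 2 4 ..
  also have "\<dots> = msum m n RC" unfolding msum_def by (simp add: sum_divide_distrib[symmetric])
  finally show ?thesis .
qed

lemma fin_step1:
  fixes g t x :: "nat \<Rightarrow> real" and k w :: real
  assumes "\<forall>i<m. g i = k * t i"
  shows "1/2 * w * (\<Sum>i<m. x i * g i) = (k/2) * w * (\<Sum>i<m. x i * t i)"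
proof -
  have "(\<Sum>i<m. x i * g i) = (\<Sum>i<m. k * (x i * t i))"
    using assms by (intro sum.cong refl) (simp add: mult_ac)
  then show ?thesis by (simp add: sum_distrib_left[symmetric])
qed

lemma fin_step2:
  fixes g t w :: "nat \<Rightarrow> real" and k x :: real
  assumes "\<forall>j<n. g j = k * t j"
  shows "1/2 * x * (\<Sum>j<n. w j * g j) = (k/2) * x * (\<Sum>j<n. t j * w j)"
proof -
  have "(\<Sum>j<n. w j * g j) = (\<Sum>j<n. k * (t j * w j))"
    using assms by (intro sum.cong refl) (simp add: mult_ac)
  then show ?thesis by (simp add: sum_distrib_left[symmetric])
qed

theorem proposition2:
  fixes m d dh h :: nat
    and X WO Rf :: mat
    and WQ WK WV :: hmat
  assumes dims: "0 < m" "0 < d" "0 < dh" "dh dvd d" "h = d div dh"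
  defines "Q \<equiv> mha_Q d X WQ"
    and "K \<equiv> mha_Q d X WK"
    and "V \<equiv> mha_Q d X WV"
    and "E \<equiv> mha_E d dh X WQ WK"
    and "A \<equiv> mha_A m d dh X WQ WK"
    and "Oh \<equiv> mha_Oh m d dh X WQ WK WV"
    and "Ocat \<equiv> mha_O m d dh X WQ WK WV"
    and "f \<equiv> mha_f m d dh X WQ WK WV WO"
  assumes nz_f: "\<forall>i<m. \<forall>j<d. f i j \<noteq> 0"
    and nz_O: "\<forall>i<m. \<forall>j<d. Ocat i j \<noteq> 0"
    and nz_E: "\<forall>r<h. \<forall>i<m. \<forall>j<m. E r i j \<noteq> 0"
    and nz_QKV: "\<forall>r<h. \<forall>i<m. \<forall>j<dh. Q r i j \<noteq> 0 \<and> K r i j \<noteq> 0 \<and> V r i j \<noteq> 0"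
  defines "RWO \<equiv> lrp_WO m d dh X WQ WK WV WO Rf"
    and "RWQ \<equiv> lrp_WQ m d dh X WQ WK WV WO Rf"
    and "RWK \<equiv> lrp_WK m d dh X WQ WK WV WO Rf"
    and "RWV \<equiv> lrp_WV m d dh X WQ WK WV WO Rf"
    and "RX \<equiv> lrp_X h m d dh X WQ WK WV WO Rf"
  shows "let Lf = (\<lambda>i j. Rf i j / f i j);
             LO = (\<lambda>r i j. block dh (\<lambda>i j. 1/2 * Ocat i j * mmul d Lf (tr WO) i j) r i j / Oh r i j);
             alpha = 1 / (8 * sqrt (real dh));
             Phi = (\<lambda>r i j. A r i j * mmul dh (LO r) (tr (V r)) i j / E r i j);
             ThQ = (\<lambda>r. mmul m (Phi r) (K r));
             ThK = (\<lambda>r. mmul m (tr (Phi r)) (Q r));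
             ThV = (\<lambda>r. mmul m (tr (A r)) (LO r))
         in (\<forall>a<d. \<forall>j<d. RWO a j = 1/2 * WO a j * mmul m (tr Ocat) Lf a j)
       \<and> (\<forall>r<h. \<forall>a<d. \<forall>j<dh.
             RWQ r a j = alpha * WQ r a j * mmul m (tr X) (ThQ r) a j
           \<and> RWK r a j = alpha * WK r a j * mmul m (tr X) (ThK r) a j
           \<and> RWV r a j = 1/4 * WV r a j * mmul m (tr X) (ThV r) a j)
       \<and> (\<forall>i<m. \<forall>a<d. RX i a = X i a * (\<Sum>r<h.
              alpha * mmul dh (ThQ r) (tr (WQ r)) i a
            + alpha * mmul dh (ThK r) (tr (WK r)) i a
            + 1/4 * mmul dh (ThV r) (tr (WV r)) i a))
       \<and> msum m d RX + msum d d RWO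
           + (\<Sum>r<h. msum d dh (RWQ r) + msum d dh (RWK r) + msum d dh (RWV r))
         = msum m d Rf"
proof -
  define c where "c = 1 / sqrt (real dh)"
  define Lf where "Lf = (\<lambda>i j. Rf i j / f i j)"
  define LO where "LO = (\<lambda>r i j. block dh (\<lambda>i j. 1/2 * Ocat i j * mmul d Lf (tr WO) i j) r i j / Oh r i j)"
  define alpha where "alpha = 1 / (8 * sqrt (real dh))"
  define Phi where "Phi = (\<lambda>r i j. A r i j * mmul dh (LO r) (tr (V r)) i j / E r i j)"
  define ThQ where "ThQ = (\<lambda>r. mmul m (Phi r) (K r))"
  define ThK where "ThK = (\<lambda>r. mmul m (tr (Phi r)) (Q r))"
  define ThV where "ThV = (\<lambda>r. mmul m (tr (A r)) (LO r))"
  define RO where "RO = lrp_O m d dh X WQ WK WV WO Rf"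
  define ROh where "ROh = lrp_Oh m d dh X WQ WK WV WO Rf"
  define RA where "RA = lrp_A m d dh X WQ WK WV WO Rf"
  define RV where "RV = lrp_V m d dh X WQ WK WV WO Rf"
  define RQ where "RQ = lrp_Q m d dh X WQ WK WV WO Rf"
  define RK where "RK = lrp_K m d dh X WQ WK WV WO Rf"
  define RXQ where "RXQ = (\<lambda>r. lrp_left 1 dh X (WQ r) (Q r) (RQ r))"
  define RXK where "RXK = (\<lambda>r. lrp_left 1 dh X (WK r) (K r) (RK r))"
  define RXV where "RXV = (\<lambda>r. lrp_left 1 dh X (WV r) (V r) (RV r))"
  have d_eq: "d = h * dh" using dims by simp
  have alpha_c: "alpha = c / 8" unfolding alpha_def c_def by simp
  have RO_eq: "RO = (\<lambda>i j. 1/2 * Ocat i j * mmul d Lf (tr WO) i j)"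
    unfolding RO_def lrp_O_def Ocat_def[symmetric] f_def[symmetric]
    by (intro ext) (simp add: lrp_left_eq Lf_def mmul_def tr_def mult.commute)
  have ROh_eq: "ROh r = block dh RO r" for r
    unfolding ROh_def lrp_Oh_def RO_def ..
  have LO_eq: "LO r i j = ROh r i j / Oh r i j" for r i j
    unfolding LO_def ROh_eq RO_eq ..
  have RA_eq: "RA r i k = 1/2 * A r i k * mmul dh (LO r) (tr (V r)) i k" for r i k
    unfolding RA_def lrp_A_def A_def[symmetric] V_def[symmetric] Oh_def[symmetric] ROh_def[symmetric]
    by (simp add: lrp_left_eq mmul_def tr_def LO_eq mult.commute)
  have REdiv: "RA r i k / E r i k = Phi r i k / 2" for r i k
    by (simp add: RA_eq Phi_def)
  have RQ_eq: "RQ r i a = c/4 * Q r i a * ThQ r i a" for r i a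
  proof -
    have "RQ r i a = c/2 * Q r i a * (\<Sum>j<m. K r j a * (Phi r i j / 2))"
      unfolding RQ_def lrp_Q_def lrp_E_def RA_def[symmetric] Q_def[symmetric] K_def[symmetric]
        E_def[symmetric] c_def[symmetric]
      by (simp add: lrp_left_eq REdiv tr_def)
    also have "(\<Sum>j<m. K r j a * (Phi r i j / 2)) = ThQ r i a / 2"
      unfolding ThQ_def mmul_def by (simp add: sum_divide_distrib mult.commute)
    finally show ?thesis by simp
  qed
  have RK_eq: "RK r j a = c/4 * K r j a * ThK r j a" for r j a
  proof -
    have "RK r j a = c/2 * K r j a * (\<Sum>i<m. Q r i a * (Phi r i j / 2))"
      unfolding RK_def lrp_K_def lrp_E_def RA_def[symmetric] Q_def[symmetric] K_def[symmetric]
        E_def[symmetric] c_def[symmetric]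
      by (simp add: lrp_right_eq REdiv tr_def)
    also have "(\<Sum>i<m. Q r i a * (Phi r i j / 2)) = ThK r j a / 2"
      unfolding ThK_def mmul_def tr_def by (simp add: sum_divide_distrib mult.commute)
    finally show ?thesis by simp
  qed
  have RV_eq: "RV r k j = 1/2 * V r k j * ThV r k j" for r k j
    unfolding RV_def lrp_V_def A_def[symmetric] V_def[symmetric] Oh_def[symmetric] ROh_def[symmetric]
    by (simp add: lrp_right_eq ThV_def mmul_def tr_def LO_eq)
  have RQdiv: "RQ r i j / Q r i j = c/4 * ThQ r i j" if "r < h" "i < m" "j < dh" for r i j
    using nz_QKV that by (simp add: RQ_eq)
  have RKdiv: "RK r i j / K r i j = c/4 * ThK r i j" if "r < h" "i < m" "j < dh" for r i j
    using nz_QKV that by (simp add: RK_eq)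
  have RVdiv: "RV r i j / V r i j = 1/2 * ThV r i j" if "r < h" "i < m" "j < dh" for r i j
    using nz_QKV that by (simp add: RV_eq)
  have Oh_at: "Oh r i j = Ocat i (r*dh+j)" if "j < dh" for r i j
    using that dims unfolding Ocat_def mha_O_def concat_heads_def Oh_def by simp
  have idx_lt: "r*dh+j < d" if "r < h" "j < dh" for r j
  proof -
    have "(r+1)*dh \<le> h*dh" using that by (intro mult_le_mono1) simp
    then show ?thesis using that d_eq by simp
  qed
  have cons_f: "msum m d RO + msum d d RWO = msum m d Rf"
    unfolding RO_def RWO_def lrp_O_def lrp_WO_def
  proof (rule conserve)
    show "\<forall>i<m. \<forall>j<d. mha_f m d dh X WQ WK WV WO i j = 1 * (\<Sum>a<d. mha_O m d dh X WQ WK WV i a * WO a j)"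
      by (simp add: mha_f_def mmul_def)
    show "\<forall>i<m. \<forall>j<d. mha_f m d dh X WQ WK WV WO i j \<noteq> 0" using nz_f unfolding f_def .
  qed
  have split_O: "msum m d RO = (\<Sum>r<h. msum m dh (ROh r))"
    unfolding ROh_eq d_eq by (rule msum_block)
  have cons_Oh: "msum m m (RA r) + msum m dh (RV r) = msum m dh (ROh r)" if "r < h" for r
    unfolding RA_def RV_def lrp_A_def lrp_V_def ROh_def
  proof (rule conserve)
    show "\<forall>i<m. \<forall>j<dh. mha_Oh m d dh X WQ WK WV r i j = 1 * (\<Sum>a<m. mha_A m d dh X WQ WK r i a * mha_Q d X WV r a j)"
      by (simp add: mha_Oh_def mmul_def)
    show "\<forall>i<m. \<forall>j<dh. mha_Oh m d dh X WQ WK WV r i j \<noteq> 0"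
      using nz_O Oh_at idx_lt that unfolding Oh_def by simp
  qed
  have cons_E: "msum m dh (RQ r) + msum m dh (RK r) = msum m m (RA r)" if "r < h" for r
  proof -
    have "msum m dh (RK r) = msum dh m (lrp_right (1 / sqrt (real dh)) m (mha_Q d X WQ r) (tr (mha_Q d X WK r))
       (mha_E d dh X WQ WK r) (lrp_E m d dh X WQ WK WV WO Rf r))"
      unfolding RK_def lrp_K_def by (rule msum_tr)
    moreover have "msum m dh (RQ r) + msum dh m (lrp_right (1 / sqrt (real dh)) m (mha_Q d X WQ r) (tr (mha_Q d X WK r))
       (mha_E d dh X WQ WK r) (lrp_E m d dh X WQ WK WV WO Rf r)) = msum m m (RA r)"
      unfolding RQ_def lrp_Q_def lrp_E_def RA_def
    proof (rule conserve)
      show "\<forall>i<m. \<forall>j<m. mha_E d dh X WQ WK r i j = 1 / sqrt (real dh) * (\<Sum>a<dh. mha_Q d X WQ r i a * tr (mha_Q d X WK r) a j)"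
        by (simp add: mha_E_def mmul_def)
      show "\<forall>i<m. \<forall>j<m. mha_E d dh X WQ WK r i j \<noteq> 0" using nz_E that unfolding E_def by simp
    qed
    ultimately show ?thesis by simp
  qed
  have cons_Q: "msum m d (RXQ r) + msum d dh (RWQ r) = msum m dh (RQ r)" if "r < h" for r
    unfolding RXQ_def RWQ_def lrp_WQ_def RQ_def Q_def
  proof (rule conserve)
    show "\<forall>i<m. \<forall>j<dh. mha_Q d X WQ r i j = 1 * (\<Sum>a<d. X i a * WQ r a j)"
      by (simp add: mha_Q_def mmul_def)
    show "\<forall>i<m. \<forall>j<dh. mha_Q d X WQ r i j \<noteq> 0" using nz_QKV that unfolding Q_def by simp
  qed
  have cons_K: "msum m d (RXK r) + msum d dh (RWK r) = msum m dh (RK r)" if "r < h" for r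
    unfolding RXK_def RWK_def lrp_WK_def RK_def K_def
  proof (rule conserve)
    show "\<forall>i<m. \<forall>j<dh. mha_Q d X WK r i j = 1 * (\<Sum>a<d. X i a * WK r a j)"
      by (simp add: mha_Q_def mmul_def)
    show "\<forall>i<m. \<forall>j<dh. mha_Q d X WK r i j \<noteq> 0" using nz_QKV that unfolding K_def by simp
  qed
  have cons_V: "msum m d (RXV r) + msum d dh (RWV r) = msum m dh (RV r)" if "r < h" for r
    unfolding RXV_def RWV_def lrp_WV_def RV_def V_def
  proof (rule conserve)
    show "\<forall>i<m. \<forall>j<dh. mha_Q d X WV r i j = 1 * (\<Sum>a<d. X i a * WV r a j)"
      by (simp add: mha_Q_def mmul_def)
    show "\<forall>i<m. \<forall>j<dh. mha_Q d X WV r i j \<noteq> 0" using nz_QKV that unfolding V_def by simp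
  qed
  have RX_eq: "RX = (\<lambda>i a. \<Sum>r<h. RXQ r i a + RXK r i a + RXV r i a)"
    unfolding RX_def lrp_X_def RXQ_def RXK_def RXV_def RQ_def RK_def RV_def Q_def K_def V_def ..
  have cons_total: "msum m d RX + msum d d RWO
           + (\<Sum>r<h. msum d dh (RWQ r) + msum d dh (RWK r) + msum d dh (RWV r))
         = msum m d Rf"
  proof -
    have "msum m d RX = (\<Sum>r<h. msum m d (RXQ r) + msum m d (RXK r) + msum m d (RXV r))"
      unfolding RX_eq msum_sum msum_add3 ..
    moreover have "(\<Sum>r<h. msum m dh (ROh r)) = (\<Sum>r<h. (msum m d (RXQ r) + msum m d (RXK r) + msum m d (RXV r))
        + (msum d dh (RWQ r) + msum d dh (RWK r) + msum d dh (RWV r)))"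
    proof (rule sum.cong[OF refl])
      fix r assume "r \<in> {..<h}"
      then have r: "r < h" by simp
      show "msum m dh (ROh r) = (msum m d (RXQ r) + msum m d (RXK r) + msum m d (RXV r))
        + (msum d dh (RWQ r) + msum d dh (RWK r) + msum d dh (RWV r))"
        using cons_Oh[OF r] cons_E[OF r] cons_Q[OF r] cons_K[OF r] cons_V[OF r] by linarith
    qed
    ultimately show ?thesis using cons_f split_O by (simp add: sum.distrib)
  qed
  have P1: "\<forall>a<d. \<forall>j<d. RWO a j = 1/2 * WO a j * mmul m (tr Ocat) Lf a j"
    unfolding RWO_def lrp_WO_def Ocat_def[symmetric] f_def[symmetric]
    by (simp add: lrp_right_eq mmul_def tr_def Lf_def)
  have P2: "\<forall>r<h. \<forall>a<d. \<forall>j<dh.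
             RWQ r a j = alpha * WQ r a j * mmul m (tr X) (ThQ r) a j
           \<and> RWK r a j = alpha * WK r a j * mmul m (tr X) (ThK r) a j
           \<and> RWV r a j = 1/4 * WV r a j * mmul m (tr X) (ThV r) a j"
  proof (intro allI impI conjI)
    fix r a j assume r: "r < h" and a: "a < d" and j: "j < dh"
    have "RWQ r a j = 1/2 * WQ r a j * (\<Sum>i<m. X i a * (RQ r i j / Q r i j))"
      unfolding RWQ_def lrp_WQ_def RQ_def[symmetric] Q_def[symmetric] by (simp add: lrp_right_eq)
    also have "\<dots> = ((c/4)/2) * WQ r a j * (\<Sum>i<m. X i a * ThQ r i j)"
      by (rule fin_step1) (simp add: RQdiv r j)
    finally show "RWQ r a j = alpha * WQ r a j * mmul m (tr X) (ThQ r) a j"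
      by (simp add: alpha_c mmul_def tr_def)
    have "RWK r a j = 1/2 * WK r a j * (\<Sum>i<m. X i a * (RK r i j / K r i j))"
      unfolding RWK_def lrp_WK_def RK_def[symmetric] K_def[symmetric] by (simp add: lrp_right_eq)
    also have "\<dots> = ((c/4)/2) * WK r a j * (\<Sum>i<m. X i a * ThK r i j)"
      by (rule fin_step1) (simp add: RKdiv r j)
    finally show "RWK r a j = alpha * WK r a j * mmul m (tr X) (ThK r) a j"
      by (simp add: alpha_c mmul_def tr_def)
    have "RWV r a j = 1/2 * WV r a j * (\<Sum>i<m. X i a * (RV r i j / V r i j))"
      unfolding RWV_def lrp_WV_def RV_def[symmetric] V_def[symmetric] by (simp add: lrp_right_eq)
    also have "\<dots> = ((1/2)/2) * WV r a j * (\<Sum>i<m. X i a * ThV r i j)"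
      by (rule fin_step1) (simp add: RVdiv r j)
    finally show "RWV r a j = 1/4 * WV r a j * mmul m (tr X) (ThV r) a j"
      by (simp add: mmul_def tr_def)
  qed
  have P3: "\<forall>i<m. \<forall>a<d. RX i a = X i a * (\<Sum>r<h.
              alpha * mmul dh (ThQ r) (tr (WQ r)) i a
            + alpha * mmul dh (ThK r) (tr (WK r)) i a
            + 1/4 * mmul dh (ThV r) (tr (WV r)) i a)"
  proof (intro allI impI)
    fix i a assume i: "i < m" and a: "a < d"
    have "RX i a = (\<Sum>r<h. X i a * (alpha * mmul dh (ThQ r) (tr (WQ r)) i a
            + alpha * mmul dh (ThK r) (tr (WK r)) i a
            + 1/4 * mmul dh (ThV r) (tr (WV r)) i a))"
      unfolding RX_eq
    proof (rule sum.cong[OF refl])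
      fix r assume "r \<in> {..<h}"
      then have r: "r < h" by simp
      have "RXQ r i a = 1/2 * X i a * (\<Sum>j<dh. WQ r a j * (RQ r i j / Q r i j))"
        unfolding RXQ_def by (simp add: lrp_left_eq)
      also have "\<dots> = ((c/4)/2) * X i a * (\<Sum>j<dh. ThQ r i j * WQ r a j)"
        by (rule fin_step2) (simp add: RQdiv r i)
      finally have 1: "RXQ r i a = X i a * (alpha * mmul dh (ThQ r) (tr (WQ r)) i a)"
        by (simp add: alpha_c mmul_def tr_def)
      have "RXK r i a = 1/2 * X i a * (\<Sum>j<dh. WK r a j * (RK r i j / K r i j))"
        unfolding RXK_def by (simp add: lrp_left_eq)
      also have "\<dots> = ((c/4)/2) * X i a * (\<Sum>j<dh. ThK r i j * WK r a j)"
        by (rule fin_step2) (simp add: RKdiv r i)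
      finally have 2: "RXK r i a = X i a * (alpha * mmul dh (ThK r) (tr (WK r)) i a)"
        by (simp add: alpha_c mmul_def tr_def)
      have "RXV r i a = 1/2 * X i a * (\<Sum>j<dh. WV r a j * (RV r i j / V r i j))"
        unfolding RXV_def by (simp add: lrp_left_eq)
      also have "\<dots> = ((1/2)/2) * X i a * (\<Sum>j<dh. ThV r i j * WV r a j)"
        by (rule fin_step2) (simp add: RVdiv r i)
      finally have 3: "RXV r i a = X i a * (1/4 * mmul dh (ThV r) (tr (WV r)) i a)"
        by (simp add: mmul_def tr_def)
      show "RXQ r i a + RXK r i a + RXV r i a = X i a * (alpha * mmul dh (ThQ r) (tr (WQ r)) i a
            + alpha * mmul dh (ThK r) (tr (WK r)) i a
            + 1/4 * mmul dh (ThV r) (tr (WV r)) i a)"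
        unfolding 1 2 3 by (simp add: distrib_left)
    qed
    then show "RX i a = X i a * (\<Sum>r<h.
              alpha * mmul dh (ThQ r) (tr (WQ r)) i a
            + alpha * mmul dh (ThK r) (tr (WK r)) i a
            + 1/4 * mmul dh (ThV r) (tr (WV r)) i a)"
      by (simp add: sum_distrib_left)
  qed
  have G: "(\<forall>a<d. \<forall>j<d. RWO a j = 1/2 * WO a j * mmul m (tr Ocat) Lf a j)
       \<and> (\<forall>r<h. \<forall>a<d. \<forall>j<dh.
             RWQ r a j = alpha * WQ r a j * mmul m (tr X) (ThQ r) a j
           \<and> RWK r a j = alpha * WK r a j * mmul m (tr X) (ThK r) a j
           \<and> RWV r a j = 1/4 * WV r a j * mmul m (tr X) (ThV r) a j)
       \<and> (\<forall>i<m. \<forall>a<d. RX i a = X i a * (\<Sum>r<h.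
              alpha * mmul dh (ThQ r) (tr (WQ r)) i a
            + alpha * mmul dh (ThK r) (tr (WK r)) i a
            + 1/4 * mmul dh (ThV r) (tr (WV r)) i a))
       \<and> msum m d RX + msum d d RWO
           + (\<Sum>r<h. msum d dh (RWQ r) + msum d dh (RWK r) + msum d dh (RWV r))
         = msum m d Rf"
    using P1 P2 P3 cons_total by blast
  then show ?thesis
    unfolding Let_def Lf_def LO_def alpha_def Phi_def ThQ_def ThK_def ThV_def .
qed

end
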